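(* Fix $\omega$ and let $v$ be a blocked path. Define $\hat v(i)=v(i-\delta)+2\delta v'(i-\delta)$ and $\bar v^\delta[i]=\min\{j\in\delta\mathbb{Z}:\ j\ge \hat v(i)-\delta/2\}$ for $i\in\mathbb{Z}$. Let $w$ be the continuous function that is affine on each interval $[i-1+\delta,i+\delta]$, $i\in\mathbb{Z}$, with $w(i+\delta)=\hat v(i)$ for all $i$, and let $\bar w^\delta$ be the analogous function with $\bar w^\delta(i+\delta)=\bar v^\delta[i]$. Then $v\ge w$ and $v+\delta/2\ge \bar w^\delta$ on $\mathbb{R}$.
   Context: Fix $0<\delta\ll1/2$, $F>0$. Let $\mathbb{Z}^*=\mathbb{Z}+\tfrac12$, $b_{i,j}=(i,j)$; $\phi\in C_c^\infty(\mathbb{R}^2)$ nonnegative with support in $[-\delta,\delta]^2$, $\phi_{i,j}(x,s)=\phi((x,s)-b_{i,j})$; $(l(i,j)(\omega))_{(i,j)\in\mathbb{Z}\times\mathbb{Z}^*}$ nonnegative (i.i.d. exponential) random variables. For small $\varepsilon>0$ let $A=\mathbb{R}\setminus\bigcup_{i\in\mathbb{Z}}(i-\delta,i+\delta)$, $A_\varepsilon=\mathbb{R}\setminus\bigcup_{i\in\mathbb{Z}}(i-\delta-\varepsilon,i+\delta+\varepsilon)$, and $\chi_A^\varepsilon$ a smooth function with $\chi_{A_\varepsilon}\le\chi_A^\varepsilon\le\chi_A$. A blocked path is a function $v\in C^1_{loc}(\mathbb{R})$ such that for every $i\in\mathbb{Z}$: $v''(x)=-F\chi_A^\varepsilon(x)$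 on $(i+\delta,i+1-\delta)$ and $v''(x)=\sum_{j\in\mathbb{Z}^*}l(i,j)(\omega)\phi_{i,j}(x,v(x))$ on $(i-\delta,i+\delta)$. *)

theory Defs
  imports "HOL-Analysis.Analysis"
begin

definition smooth1 :: "(real \<Rightarrow> real) \<Rightarrow> bool" where
  "smooth1 f \<longleftrightarrow> (\<forall>n x. ((deriv ^^ n) f) differentiable (at x))"

definition pd1 :: "(real \<times> real \<Rightarrow> real) \<Rightarrow> real \<times> real \<Rightarrow> real" where
  "pd1 f p = deriv (\<lambda>t. f (t, snd p)) (fst p)"

definition pd2 :: "(real \<times> real \<Rightarrow> real) \<Rightarrow> real \<times> real \<Rightarrow> real" where
  "pd2 f p = deriv (\<lambda>t. f (fst p, t)) (snd p)"

fun pds :: "bool list \<Rightarrow> (real \<times> real \<Rightarrow> real) \<Rightarrow> real \<times> real \<Rightarrow> real" where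
  "pds [] f = f"
| "pds (b # bs) f = (if b then pd1 else pd2) (pds bs f)"

definition smooth2 :: "(real \<times> real \<Rightarrow> real) \<Rightarrow> bool" where
  "smooth2 f \<longleftrightarrow> (\<forall>bs. continuous_on UNIV (pds bs f)
      \<and> (\<forall>p. (\<lambda>t. pds bs f (t, snd p)) differentiable (at (fst p)))
      \<and> (\<forall>p. (\<lambda>t. pds bs f (fst p, t)) differentiable (at (snd p))))"

definition Zstar :: "real set" where
  "Zstar = {real_of_int k + 1/2 | k. True}"

definition setA :: "real \<Rightarrow> real set" where
  "setA d = - (\<Union>i::int. {real_of_int i - d <..< real_of_int i + d})"

definition blocked_path ::
  "real \<Rightarrow> real \<Rightarrow> (real \<times> real \<Rightarrow> real) \<Rightarrow> (int \<Rightarrow> real \<Rightarrow> real)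
   \<Rightarrow> (real \<Rightarrow> real) \<Rightarrow> (real \<Rightarrow> real) \<Rightarrow> bool" where
  "blocked_path \<delta> F \<phi> l chi v \<longleftrightarrow>
     (\<forall>x. v differentiable (at x)) \<and> continuous_on UNIV (deriv v) \<and>
     (\<forall>i::int. \<forall>x \<in> {real_of_int i + \<delta> <..< real_of_int i + 1 - \<delta>}.
         (deriv v has_real_derivative (- F * chi x)) (at x)) \<and>
     (\<forall>i::int. \<forall>x \<in> {real_of_int i - \<delta> <..< real_of_int i + \<delta>}.
         (deriv v has_real_derivative
            (\<Sum>\<^sub>\<infinity>j\<in>Zstar. l i j * \<phi> (x - real_of_int i, v x - j))) (at x))"

definition vhat :: "real \<Rightarrow> (real \<Rightarrow> real) \<Rightarrow> int \<Rightarrow> real" where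
  "vhat \<delta> v i = v (real_of_int i - \<delta>) + 2 * \<delta> * deriv v (real_of_int i - \<delta>)"

definition vbar :: "real \<Rightarrow> (real \<Rightarrow> real) \<Rightarrow> int \<Rightarrow> real" where
  "vbar \<delta> v i = (LEAST j. (\<exists>k::int. j = \<delta> * real_of_int k) \<and> j \<ge> vhat \<delta> v i - \<delta> / 2)"

definition pw_affine_interp :: "real \<Rightarrow> (int \<Rightarrow> real) \<Rightarrow> (real \<Rightarrow> real) \<Rightarrow> bool" where
  "pw_affine_interp \<delta> c g \<longleftrightarrow> continuous_on UNIV g \<and>
     (\<forall>i::int. \<exists>a b. \<forall>x \<in> {real_of_int i - 1 + \<delta> .. real_of_int i + \<delta>}. g x = a * x + b) \<and>
     (\<forall>i::int. g (real_of_int i + \<delta>) = c i)"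

end

theory Submission
  imports Defs
begin

lemma lin_nonneg:
  fixes p q a b y :: real
  assumes "p*a+q \<ge> 0" "p*b+q \<ge> 0" "a \<le> y" "y \<le> b"
  shows "p*y+q \<ge> 0"
proof (cases "a = b")
  case True then show ?thesis using assms by auto
next
  case False
  hence ab: "a < b" using assms by auto
  have "(b-a)*(p*y+q) = (b-y)*(p*a+q) + (y-a)*(p*b+q)" by (simp add: algebra_simps)
  also have "\<dots> \<ge> 0" using assms by (metis add_nonneg_nonneg diff_ge_0_iff_ge mult_nonneg_nonneg)
  finally show ?thesis using ab by (simp add: zero_le_mult_iff)
qed

lemma tangent_convex:
  fixes v v' :: "real \<Rightarrow> real"
  assumes der: "\<And>x. DERIV v x :> v' x"
    and mono: "\<And>x y. \<alpha> \<le> x \<Longrightarrow> x \<le> y \<Longrightarrow> y \<le> \<beta> \<Longrightarrow> v' x \<le> v' y"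
    and x: "\<alpha> \<le> x" "x \<le> \<beta>"
  shows "v x \<ge> v \<alpha> + (x-\<alpha>) * v' \<alpha>"
proof (cases "x = \<alpha>")
  case True then show ?thesis by simp
next
  case False
  then obtain z where z: "\<alpha> < z" "z < x" "v x - v \<alpha> = (x-\<alpha>) * v' z"
    using MVT2[of \<alpha> x v v'] der x by force
  have "v' \<alpha> \<le> v' z" using mono z x by auto
  hence "(x-\<alpha>) * v' \<alpha> \<le> (x-\<alpha>) * v' z" using x by (intro mult_left_mono) auto
  thus ?thesis using z by linarith
qed

lemma tangent_concave:
  fixes v v' :: "real \<Rightarrow> real"
  assumes der: "\<And>x. DERIV v x :> v' x"
    and mono: "\<And>x y. \<alpha> \<le> x \<Longrightarrow> x \<le> y \<Longrightarrow> y \<le> \<beta> \<Longrightarrow> v' y \<le> v' x"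
    and x: "\<alpha> \<le> x" "x \<le> \<beta>"
  shows "v x \<le> v \<beta> + (x-\<beta>) * v' \<beta>"
proof (cases "x = \<beta>")
  case True then show ?thesis by simp
next
  case False
  then obtain z where z: "x < z" "z < \<beta>" "v \<beta> - v x = (\<beta>-x) * v' z"
    using MVT2[of x \<beta> v v'] der x by force
  have "v' \<beta> \<le> v' z" using mono z x by auto
  hence "(\<beta>-x) * v' \<beta> \<le> (\<beta>-x) * v' z" using x by (intro mult_left_mono) auto
  thus ?thesis using z by (simp add: algebra_simps)
qed

lemma chord_concave:
  fixes v v' :: "real \<Rightarrow> real"
  assumes der: "\<And>x. DERIV v x :> v' x"
    and mono: "\<And>x y. \<alpha> \<le> x \<Longrightarrow> x \<le> y \<Longrightarrow> y \<le> \<beta> \<Longrightarrow> v' y \<le> v' x"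
    and x: "\<alpha> < x" "x < \<beta>"
  shows "v x \<ge> v \<alpha> + (x-\<alpha>) * ((v \<beta> - v \<alpha>)/(\<beta>-\<alpha>))"
proof -
  obtain z1 where z1: "\<alpha> < z1" "z1 < x" "v x - v \<alpha> = (x-\<alpha>) * v' z1"
    using MVT2[of \<alpha> x v v'] der x by force
  obtain z2 where z2: "x < z2" "z2 < \<beta>" "v \<beta> - v x = (\<beta>-x) * v' z2"
    using MVT2[of x \<beta> v v'] der x by force
  have s: "v' z2 \<le> v' z1" using mono z1 z2 by auto
  define sA where "sA = v' z1"
  define sB where "sB = v' z2"
  have e: "(v \<beta> - v \<alpha>) = (x-\<alpha>)* sA + (\<beta>-x)* sB" using z1 z2 unfolding sA_def sB_def by linarith
  have "(x-\<alpha>) * (v \<beta> - v \<alpha>) \<le> (x-\<alpha>) * ((\<beta>-\<alpha>) * sA)"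
  proof -
    have "(\<beta>-x)* sB \<le> (\<beta>-x)* sA" using s x unfolding sA_def sB_def by (intro mult_left_mono) auto
    hence "v \<beta> - v \<alpha> \<le> (\<beta>-\<alpha>)* sA" using e by (simp add: algebra_simps)
    thus ?thesis using x by (intro mult_left_mono) auto
  qed
  hence "(x-\<alpha>) * ((v \<beta> - v \<alpha>)/(\<beta>-\<alpha>)) \<le> (x-\<alpha>) * sA"
    using x by (simp add: field_simps)
  thus ?thesis using z1 unfolding sA_def by linarith
qed

lemma pw_le:
  fixes \<delta> :: real
  assumes g: "pw_affine_interp \<delta> c g" and h: "pw_affine_interp \<delta> d h"
    and cd: "\<And>i. c i \<le> d i"
  shows "g x \<le> h x"
proof -
  define i where "i = ceiling (x - \<delta>)"
  have i1: "real_of_int i - 1 + \<delta> \<le> x" "x \<le> real_of_int i + \<delta>"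
    unfolding i_def using ceiling_correct[of "x-\<delta>"] by linarith+
  obtain a b where ab: "\<forall>y \<in> {real_of_int i - 1 + \<delta> .. real_of_int i + \<delta>}. g y = a * y + b"
    using g unfolding pw_affine_interp_def by blast
  obtain a' b' where ab': "\<forall>y \<in> {real_of_int i - 1 + \<delta> .. real_of_int i + \<delta>}. h y = a' * y + b'"
    using h unfolding pw_affine_interp_def by blast
  have "real_of_int i - 1 + \<delta> \<le> real_of_int i + \<delta>" by simp
  have ga: "g (real_of_int i - 1 + \<delta>) = c (i-1)" "g (real_of_int i + \<delta>) = c i"
    using g unfolding pw_affine_interp_def by (metis of_int_diff of_int_1)+
  have ha: "h (real_of_int i - 1 + \<delta>) = d (i-1)" "h (real_of_int i + \<delta>) = d i"
    using h unfolding pw_affine_interp_def by (metis of_int_diff of_int_1)+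
  have "(a'-a)*x + (b'-b) \<ge> 0"
  proof (rule lin_nonneg[OF _ _ i1])
    show "0 \<le> (a'-a) * (real_of_int i - 1 + \<delta>) + (b'-b)"
      using ga ha ab ab' cd[of "i-1"] by (auto simp: algebra_simps)
    show "0 \<le> (a'-a) * (real_of_int i + \<delta>) + (b'-b)"
      using ga ha ab ab' cd[of "i"] by (auto simp: algebra_simps)
  qed
  thus ?thesis using ab ab' i1 by (auto simp: algebra_simps)
qed

lemma vbar_le:
  fixes \<delta> :: real
  assumes "0 < \<delta>"
  shows "vbar \<delta> v i \<le> vhat \<delta> v i + \<delta>/2"
proof -
  define c where "c = vhat \<delta> v i - \<delta>/2"
  define k0 where "k0 = ceiling (c/\<delta>)"
  have "vbar \<delta> v i = \<delta> * real_of_int k0"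
    unfolding vbar_def c_def[symmetric]
  proof (rule Least_equality)
    show "(\<exists>k. \<delta> * real_of_int k0 = \<delta> * real_of_int k) \<and> c \<le> \<delta> * real_of_int k0"
    proof -
      have "c/\<delta> \<le> real_of_int k0" unfolding k0_def by simp
      hence "c \<le> \<delta> * real_of_int k0" using assms by (simp add: field_simps)
      thus ?thesis by auto
    qed
    fix y assume "(\<exists>k::int. y = \<delta> * real_of_int k) \<and> c \<le> y"
    then obtain k where k: "y = \<delta> * real_of_int k" "c \<le> y" by auto
    hence "c/\<delta> \<le> real_of_int k" using assms by (auto simp: field_simps)
    hence "k0 \<le> k" unfolding k0_def by (simp add: ceiling_le_iff)
    thus "\<delta> * real_of_int k0 \<le> y" using k assms by simp
  qed
  moreover
  have k1: "real_of_int k0 < c/\<delta> + 1" unfolding k0_def by linarith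
  have k2: "\<delta> * real_of_int k0 < \<delta> * (c/\<delta> + 1)" using assms k1 by simp
  have k3: "\<delta> * (c/\<delta> + 1) = c + \<delta>" using assms by (simp add: field_simps)
  have "\<delta> * real_of_int k0 < c + \<delta>" using k2 k3 by linarith
  ultimately show ?thesis unfolding c_def by simp
qed

theorem mainTheorem4:
  fixes \<delta> F \<epsilon> :: real
    and \<phi> :: "real \<times> real \<Rightarrow> real"
    and l :: "int \<Rightarrow> real \<Rightarrow> real"
    and chi v w wbar :: "real \<Rightarrow> real"
  assumes "0 < \<delta>" and "\<delta> < 1/2" and "0 < F" and "0 < \<epsilon>"
    and "smooth2 \<phi>" and "\<forall>p. \<phi> p \<ge> 0"
    and "\<forall>x s. \<phi> (x, s) \<noteq> 0 \<longrightarrow> \<bar>x\<bar> \<le> \<delta> \<and> \<bar>s\<bar> \<le> \<delta>"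
    and "\<forall>i. \<forall>j\<in>Zstar. l i j \<ge> 0"
    and "smooth1 chi"
    and "\<forall>x. indicator (setA (\<delta> + \<epsilon>)) x \<le> chi x \<and> chi x \<le> indicator (setA \<delta>) x"
    and "blocked_path \<delta> F \<phi> l chi v"
    and "pw_affine_interp \<delta> (vhat \<delta> v) w"
    and "pw_affine_interp \<delta> (vbar \<delta> v) wbar"
  shows "(\<forall>x. v x \<ge> w x) \<and> (\<forall>x. v x + \<delta> / 2 \<ge> wbar x)"
proof -
  have d0: "0 < \<delta>" and d1: "\<delta> < 1/2" using assms by auto
  have bp: "blocked_path \<delta> F \<phi> l chi v" using assms by auto
  have der: "\<And>x. DERIV v x :> deriv v x"
    using bp unfolding blocked_path_def by (simp add: DERIV_deriv_iff_real_differentiable)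
  have cont: "continuous_on UNIV (deriv v)" using bp unfolding blocked_path_def by auto
  have chi0: "\<And>x. chi x \<ge> 0" using assms(10) by (meson indicator_pos_le order_trans)
  have cc: "\<And>(i::int) x y. real_of_int i + \<delta> \<le> x \<Longrightarrow> x \<le> y \<Longrightarrow> y \<le> real_of_int i + 1 - \<delta>
      \<Longrightarrow> deriv v y \<le> deriv v x"
  proof -
    fix i :: int and x y :: real
    assume h: "real_of_int i + \<delta> \<le> x" "x \<le> y" "y \<le> real_of_int i + 1 - \<delta>"
    show "deriv v y \<le> deriv v x"
    proof (rule DERIV_nonpos_imp_decreasing_open[OF h(2)])
      fix z assume z: "x < z" "z < y"
      have "z \<in> {real_of_int i + \<delta> <..< real_of_int i + 1 - \<delta>}" using h z by auto
      hence "(deriv v has_real_derivative (- F * chi z)) (at z)"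
        using bp unfolding blocked_path_def by blast
      moreover have "- F * chi z \<le> 0" using assms(3) chi0[of z] by simp
      ultimately show "\<exists>y. DERIV (deriv v) z :> y \<and> y \<le> 0" by blast
    next
      show "continuous_on {x..y} (deriv v)" using cont continuous_on_subset by blast
    qed
  qed
  have cv: "\<And>(i::int) x y. real_of_int i - \<delta> \<le> x \<Longrightarrow> x \<le> y \<Longrightarrow> y \<le> real_of_int i + \<delta>
      \<Longrightarrow> deriv v x \<le> deriv v y"
  proof -
    fix i :: int and x y :: real
    assume h: "real_of_int i - \<delta> \<le> x" "x \<le> y" "y \<le> real_of_int i + \<delta>"
    show "deriv v x \<le> deriv v y"
    proof (rule DERIV_nonneg_imp_increasing_open[OF h(2)])
      fix z assume z: "x < z" "z < y"
      have "(deriv v has_real_derivative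
            (\<Sum>\<^sub>\<infinity>j\<in>Zstar. l i j * \<phi> (z - real_of_int i, v z - j))) (at z)"
        using bp h z unfolding blocked_path_def by auto
      moreover have "(\<Sum>\<^sub>\<infinity>j\<in>Zstar. l i j * \<phi> (z - real_of_int i, v z - j)) \<ge> 0"
        using assms(6,8) by (intro infsum_nonneg mult_nonneg_nonneg) auto
      ultimately show "\<exists>y. DERIV (deriv v) z :> y \<and> y \<ge> 0" by blast
    next
      show "continuous_on {x..y} (deriv v)" using cont continuous_on_subset by blast
    qed
  qed
  have part1: "\<And>x. v x \<ge> w x"
  proof -
    fix x :: real
    define i where "i = ceiling (x - \<delta>)"
    define a where "a = real_of_int i - 1 + \<delta>"
    define b where "b = real_of_int i - \<delta>"
    define c where "c = real_of_int i + \<delta>"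
    have xi: "a < x" "x \<le> c"
      unfolding i_def a_def c_def using ceiling_correct[of "x-\<delta>"] by linarith+
    have abc: "a < b" "b < c" unfolding a_def b_def c_def using d0 d1 by auto
    obtain A B where AB: "\<forall>y \<in> {a .. c}. w y = A * y + B"
      using assms(12) unfolding pw_affine_interp_def a_def c_def by blast
    have wa: "w a = vhat \<delta> v (i-1)" and wc: "w c = vhat \<delta> v i"
      using assms(12) unfolding pw_affine_interp_def a_def c_def by (metis of_int_diff of_int_1)+
    have va: "v a \<ge> vhat \<delta> v (i-1)"
    proof -
      have "v a \<ge> v (real_of_int (i-1) - \<delta>) + (a - (real_of_int (i-1) - \<delta>)) * deriv v (real_of_int (i-1) - \<delta>)"
        by (rule tangent_convex[OF der, of _ "real_of_int (i-1) + \<delta>"])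
           (use cv[of "i-1"] d0 in \<open>auto simp: a_def\<close>)
      thus ?thesis unfolding vhat_def a_def by simp
    qed
    define T where "T y = v b + (y - b) * deriv v b" for y
    have Tc: "T c = vhat \<delta> v i" unfolding T_def vhat_def b_def c_def by simp
    have vaT: "v a \<le> T a" unfolding T_def
      by (rule tangent_concave[OF der, of a b a]) (use cc[of "i-1"] abc in \<open>auto simp: a_def b_def\<close>)
    have L: "\<And>y. a \<le> y \<Longrightarrow> y \<le> c \<Longrightarrow> w y \<le> T y"
    proof -
      fix y assume y: "a \<le> y" "y \<le> c"
      have "(deriv v b - A) * y + (v b - b * deriv v b - B) \<ge> 0"
      proof (rule lin_nonneg[OF _ _ y])
        show "0 \<le> (deriv v b - A) * a + (v b - b * deriv v b - B)"
          using AB abc wa va vaT unfolding T_def by (auto simp: algebra_simps)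
        show "0 \<le> (deriv v b - A) * c + (v b - b * deriv v b - B)"
          using AB abc wc Tc unfolding T_def by (auto simp: algebra_simps)
      qed
      thus "w y \<le> T y" using AB y unfolding T_def by (auto simp: algebra_simps)
    qed
    show "v x \<ge> w x"
    proof (cases "b \<le> x")
      case True
      have "v x \<ge> T x" unfolding T_def
        by (rule tangent_convex[OF der, of b c x]) (use cv[of i] True xi in \<open>auto simp: b_def c_def\<close>)
      thus ?thesis using L[of x] xi by linarith
    next
      case False
      define S where "S = (v b - v a)/(b-a)"
      have ch: "v x \<ge> v a + (x-a) * S" unfolding S_def
        by (rule chord_concave[OF der, of a b x]) (use cc[of "i-1"] False xi in \<open>auto simp: a_def b_def\<close>)
      have chb: "v a + (b-a) * S = v b" unfolding S_def using abc by simp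
      have wb: "w b \<le> v b" using L[of b] abc unfolding T_def by simp
      have "(S - A) * x + (v a - a * S - B) \<ge> 0"
      proof (rule lin_nonneg[of "S - A" a "v a - a * S - B" b x])
        show "0 \<le> (S - A) * a + (v a - a * S - B)"
          using AB abc wa va by (auto simp: algebra_simps)
        show "0 \<le> (S - A) * b + (v a - a * S - B)"
          using AB abc wb chb by (auto simp: algebra_simps)
      qed (use False xi in auto)
      thus ?thesis using ch AB xi False abc by (auto simp: algebra_simps)
    qed
  qed
  have part2: "\<And>x. v x + \<delta>/2 \<ge> wbar x"
  proof -
    fix x
    have pw: "pw_affine_interp \<delta> (\<lambda>i. vhat \<delta> v i + \<delta>/2) (\<lambda>y. w y + \<delta>/2)"
      using assms(12) unfolding pw_affine_interp_def
    proof (intro conjI)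
      show "continuous_on UNIV (\<lambda>y. w y + \<delta> / 2)"
        using assms(12) unfolding pw_affine_interp_def by (intro continuous_intros) auto
      show "\<forall>i::int. \<exists>a b. \<forall>x\<in>{real_of_int i - 1 + \<delta>..real_of_int i + \<delta>}. w x + \<delta> / 2 = a * x + b"
      proof
        fix i :: int
        obtain a b where "\<forall>x\<in>{real_of_int i - 1 + \<delta>..real_of_int i + \<delta>}. w x = a * x + b"
          using assms(12) unfolding pw_affine_interp_def by blast
        thus "\<exists>a b. \<forall>x\<in>{real_of_int i - 1 + \<delta>..real_of_int i + \<delta>}. w x + \<delta> / 2 = a * x + b"
          by (intro exI[of _ a] exI[of _ "b + \<delta>/2"]) auto
      qed
    qed auto
    have "wbar x \<le> w x + \<delta>/2"
      by (rule pw_le[OF assms(13) pw]) (use vbar_le[OF d0] in auto)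
    thus "v x + \<delta>/2 \<ge> wbar x" using part1[of x] by linarith
  qed
  show ?thesis using part1 part2 by blast
qed

end
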